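(* Let $L\ge2$, $C\ge1$, fix an input $x$ and a label $y\in\{1,\dots,C\}$, and let $A(\bm\theta),B(\bm\theta)\in\mathbb R^C$ be the functions of the ReLU network parameters $\bm\theta=(W_1,b_1,\dots,W_L,b_L)$ defined in the context, so that $F_x(\bm\theta)=A(\bm\theta)-B(\bm\theta)$ is the network output. Define the cross-entropy loss $\mathcal L^{\mathrm{CE}}_{x,y}(\bm\theta)=\operatorname{LSE}(F_x(\bm\theta))-A_y(\bm\theta)+B_y(\bm\theta)$, where $\operatorname{LSE}(t)=\log\sum_{c=1}^Ce^{t_c}=\max_{p\in\Delta_C}\{\langle p,t\rangle-\sum_cp_c\log p_c\}$ and $\Delta_C=\{p\ge0:\mathbf 1^\top p=1\}$. Let $g(\bm\theta)=\operatorname{LSE}(F_x(\bm\theta))+\mathbf 1^\top B(\bm\theta)+B_y(\bm\theta)$ and $h(\bm\theta)=A_y(\bm\theta)+\mathbf 1^\top B(\bm\theta)$. Then $\mathcal L^{\mathrm{CE}}_{x,y}=g-h$, and for every block $\theta_l=(W_l,b_l)$, with all other blocks fixed, $g$ and $h$ are convex in $\theta_l$; i.e. this is a BDC decomposition of $\mathcal L^{\mathrm{CE}}_{x,y}$.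
   Context: Network: $W_l\in\mathbb R^{d_l\times d_{l-1}}$, $b_l\in\mathbb R^{d_l}$ for $l<L$, $W_L\in\mathbb R^{C\times d_{L-1}}$, $b_L\in\mathbb R^C$; $\sigma(t)=\max\{t,0\}$ entrywise; vector max coordinatewise. Set $Z_1^+=\sigma(W_1x+b_1)$, $Z_1^-=0$ and for $l=1,\dots,L-2$: $p_{l+1}=\sigma(W_{l+1})Z_l^++\sigma(-W_{l+1})Z_l^-+b_{l+1}$, $Z_{l+1}^-=\sigma(W_{l+1})Z_l^-+\sigma(-W_{l+1})Z_l^+$, $Z_{l+1}^+=\max\{p_{l+1},Z_{l+1}^-\}$. Then $A(\bm\theta)=\sigma(W_L)Z_{L-1}^++\sigma(-W_L)Z_{L-1}^-+\sigma(b_L)$ and $B(\bm\theta)=\sigma(W_L)Z_{L-1}^-+\sigma(-W_L)Z_{L-1}^++\sigma(-b_L)$; $A_y,B_y$ denote their $y$-th coordinates. *)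

theory Defs
  imports Complex_Main
begin

(* Vectors are functions nat => real (only indices below the layer width matter),
   matrices are functions nat => nat => real (entry (i,j)). *)
type_synonym vec = "nat \<Rightarrow> real"
type_synonym mat = "nat \<Rightarrow> nat \<Rightarrow> real"

definition relu :: "real \<Rightarrow> real" where
  "relu t = max t 0"

definition mv :: "mat \<Rightarrow> nat \<Rightarrow> vec \<Rightarrow> vec" where
  "mv W n z = (\<lambda>i. \<Sum>j<n. W i j * z j)"

definition posm :: "mat \<Rightarrow> mat" where
  "posm W = (\<lambda>i j. relu (W i j))"

definition negm :: "mat \<Rightarrow> mat" where
  "negm W = (\<lambda>i j. relu (- W i j))"

(* d l = width of layer l (d 0 = input dimension); W l, b l = weights/bias of layer l (l = 1..L).
   Zpm ... l = (Z_l^+, Z_l^-) for l >= 1. *)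
fun Zpm :: "(nat \<Rightarrow> nat) \<Rightarrow> (nat \<Rightarrow> mat) \<Rightarrow> (nat \<Rightarrow> vec) \<Rightarrow> vec \<Rightarrow> nat \<Rightarrow> vec \<times> vec" where
  "Zpm d W b x 0 = (\<lambda>_. 0, \<lambda>_. 0)"
| "Zpm d W b x (Suc 0) = (\<lambda>i. relu ((\<Sum>j<d 0. W 1 i j * x j) + b 1 i), \<lambda>_. 0)"
| "Zpm d W b x (Suc (Suc l)) =
     (let Zp = fst (Zpm d W b x (Suc l));
          Zm = snd (Zpm d W b x (Suc l));
          p  = (\<lambda>i. mv (posm (W (l+2))) (d (l+1)) Zp i + mv (negm (W (l+2))) (d (l+1)) Zm i + b (l+2) i);
          zm = (\<lambda>i. mv (posm (W (l+2))) (d (l+1)) Zm i + mv (negm (W (l+2))) (d (l+1)) Zp i)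
      in (\<lambda>i. max (p i) (zm i), zm))"

definition netA :: "(nat \<Rightarrow> nat) \<Rightarrow> nat \<Rightarrow> (nat \<Rightarrow> mat) \<Rightarrow> (nat \<Rightarrow> vec) \<Rightarrow> vec \<Rightarrow> vec" where
  "netA d L W b x =
     (let Zp = fst (Zpm d W b x (L - 1)); Zm = snd (Zpm d W b x (L - 1))
      in (\<lambda>c. mv (posm (W L)) (d (L - 1)) Zp c + mv (negm (W L)) (d (L - 1)) Zm c + relu (b L c)))"

definition netB :: "(nat \<Rightarrow> nat) \<Rightarrow> nat \<Rightarrow> (nat \<Rightarrow> mat) \<Rightarrow> (nat \<Rightarrow> vec) \<Rightarrow> vec \<Rightarrow> vec" where
  "netB d L W b x =
     (let Zp = fst (Zpm d W b x (L - 1)); Zm = snd (Zpm d W b x (L - 1))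
      in (\<lambda>c. mv (posm (W L)) (d (L - 1)) Zm c + mv (negm (W L)) (d (L - 1)) Zp c + relu (- b L c)))"

definition netF :: "(nat \<Rightarrow> nat) \<Rightarrow> nat \<Rightarrow> (nat \<Rightarrow> mat) \<Rightarrow> (nat \<Rightarrow> vec) \<Rightarrow> vec \<Rightarrow> vec" where
  "netF d L W b x = (\<lambda>c. netA d L W b x c - netB d L W b x c)"

definition LSE :: "nat \<Rightarrow> vec \<Rightarrow> real" where
  "LSE C t = ln (\<Sum>c<C. exp (t c))"

definition CE_loss :: "(nat \<Rightarrow> nat) \<Rightarrow> nat \<Rightarrow> nat \<Rightarrow> vec \<Rightarrow> nat \<Rightarrow> (nat \<Rightarrow> mat) \<Rightarrow> (nat \<Rightarrow> vec) \<Rightarrow> real" where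
  "CE_loss d L C x y W b = LSE C (netF d L W b x) - netA d L W b x y + netB d L W b x y"

definition g_part :: "(nat \<Rightarrow> nat) \<Rightarrow> nat \<Rightarrow> nat \<Rightarrow> vec \<Rightarrow> nat \<Rightarrow> (nat \<Rightarrow> mat) \<Rightarrow> (nat \<Rightarrow> vec) \<Rightarrow> real" where
  "g_part d L C x y W b = LSE C (netF d L W b x) + (\<Sum>c<C. netB d L W b x c) + netB d L W b x y"

definition h_part :: "(nat \<Rightarrow> nat) \<Rightarrow> nat \<Rightarrow> nat \<Rightarrow> vec \<Rightarrow> nat \<Rightarrow> (nat \<Rightarrow> mat) \<Rightarrow> (nat \<Rightarrow> vec) \<Rightarrow> real" where
  "h_part d L C x y W b = netA d L W b x y + (\<Sum>c<C. netB d L W b x c)"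

definition block_convex :: "((nat \<Rightarrow> mat) \<Rightarrow> (nat \<Rightarrow> vec) \<Rightarrow> real) \<Rightarrow> (nat \<Rightarrow> mat) \<Rightarrow> (nat \<Rightarrow> vec) \<Rightarrow> nat \<Rightarrow> bool" where
  "block_convex f W b l \<longleftrightarrow>
     (\<forall>(U1::mat) U2 (c1::vec) c2 (t::real). 0 \<le> t \<and> t \<le> 1 \<longrightarrow>
        f (W(l := (\<lambda>i j. t * U1 i j + (1 - t) * U2 i j))) (b(l := (\<lambda>i. t * c1 i + (1 - t) * c2 i)))
        \<le> t * f (W(l := U1)) (b(l := c1)) + (1 - t) * f (W(l := U2)) (b(l := c2)))"

end

theory Submission
  imports Defs "HOL-Analysis.Convex"
begin

lemma sum_comb:
  "(\<Sum>j\<in>S. f j * ((t::real)*a j + (1-t)*c j)) = t * (\<Sum>j\<in>S. f j * a j) + (1-t) * (\<Sum>j\<in>S. f j * c j)"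
  "(\<Sum>j\<in>S. ((t::real)*a j + (1-t)*c j) * f j) = t * (\<Sum>j\<in>S. a j * f j) + (1-t) * (\<Sum>j\<in>S. c j * f j)"
  by (simp_all add: sum_distrib_left sum.distrib[symmetric] ring_distribs mult_ac)

lemma relu_nonneg: "0 \<le> relu a" by (simp add: relu_def)

lemma relu_jensen:
  assumes "0 \<le> (t::real)" "t \<le> 1"
  shows "relu (t*a + (1-t)*c) \<le> t * relu a + (1-t) * relu c"
proof -
  have "t*a \<le> t * relu a" using assms by (intro mult_left_mono) (auto simp: relu_def)
  moreover have "(1-t)*c \<le> (1-t) * relu c" using assms by (intro mult_left_mono) (auto simp: relu_def)
  moreover have "0 \<le> t * relu a" "0 \<le> (1-t) * relu c" using assms relu_nonneg by auto
  ultimately show ?thesis by (simp add: relu_def)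
qed

lemma relu_jensen_neg:
  assumes "0 \<le> (t::real)" "t \<le> 1"
  shows "relu (- (t*a + (1-t)*c)) \<le> t * relu (- a) + (1-t) * relu (- c)"
  using relu_jensen[OF assms, of "-a" "-c"] by (simp add: algebra_simps)

lemma max_jensen:
  assumes "0 \<le> (t::real)" "t \<le> 1" "p \<le> t*p1 + (1-t)*p0" "m \<le> t*m1 + (1-t)*m0"
  shows "max p m \<le> t * max p1 m1 + (1-t) * max p0 m0"
proof -
  have "t*p1 \<le> t * max p1 m1" "t*m1 \<le> t * max p1 m1" using assms by (auto intro: mult_left_mono)
  moreover have "(1-t)*p0 \<le> (1-t) * max p0 m0" "(1-t)*m0 \<le> (1-t) * max p0 m0"
    using assms by (auto intro: mult_left_mono)
  ultimately show ?thesis using assms by linarith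
qed

lemma mv_jensen:
  assumes "\<forall>j. 0 \<le> A i j" "\<forall>j<n. zt j \<le> t*z1 j + (1-t)*z0 j"
  shows "mv A n zt i \<le> t * mv A n z1 i + (1-t) * mv A n z0 i"
proof -
  have "mv A n zt i \<le> (\<Sum>j<n. A i j * (t*z1 j + (1-t)*z0 j))"
    unfolding mv_def using assms by (auto intro!: sum_mono mult_left_mono)
  also have "\<dots> = t * mv A n z1 i + (1-t) * mv A n z0 i"
    unfolding mv_def by (rule sum_comb)
  finally show ?thesis .
qed

lemma mv_jensenW:
  assumes "0 \<le> (t::real)" "t \<le> 1" "\<forall>j<n. 0 \<le> z j"
  shows "mv (posm (\<lambda>i j. t*U1 i j + (1-t)*U2 i j)) n z i \<le> t * mv (posm U1) n z i + (1-t) * mv (posm U2) n z i"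
    and "mv (negm (\<lambda>i j. t*U1 i j + (1-t)*U2 i j)) n z i \<le> t * mv (negm U1) n z i + (1-t) * mv (negm U2) n z i"
proof -
  have "mv (posm (\<lambda>i j. t*U1 i j + (1-t)*U2 i j)) n z i \<le> (\<Sum>j<n. (t * relu (U1 i j) + (1-t) * relu (U2 i j)) * z j)"
    unfolding mv_def posm_def using assms relu_jensen[OF assms(1,2)] by (auto intro!: sum_mono mult_right_mono)
  also have "\<dots> = t * mv (posm U1) n z i + (1-t) * mv (posm U2) n z i"
    unfolding mv_def posm_def by (rule sum_comb)
  finally show "mv (posm (\<lambda>i j. t*U1 i j + (1-t)*U2 i j)) n z i \<le> t * mv (posm U1) n z i + (1-t) * mv (posm U2) n z i" .
  have e: "- (t*U1 i j + (1-t)*U2 i j) = t*(- U1 i j) + (1-t)*(- U2 i j)" for j by (simp add: algebra_simps)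
  have "mv (negm (\<lambda>i j. t*U1 i j + (1-t)*U2 i j)) n z i \<le> (\<Sum>j<n. (t * relu (- U1 i j) + (1-t) * relu (- U2 i j)) * z j)"
    unfolding mv_def negm_def using assms relu_jensen_neg[OF assms(1,2)] by (auto intro!: sum_mono mult_right_mono)
  also have "\<dots> = t * mv (negm U1) n z i + (1-t) * mv (negm U2) n z i"
    unfolding mv_def negm_def by (rule sum_comb)
  finally show "mv (negm (\<lambda>i j. t*U1 i j + (1-t)*U2 i j)) n z i \<le> t * mv (negm U1) n z i + (1-t) * mv (negm U2) n z i" .
qed

definition lay :: "mat \<Rightarrow> vec \<Rightarrow> nat \<Rightarrow> vec \<Rightarrow> vec \<Rightarrow> vec \<times> vec" where
  "lay Wk bk n Zp Zm = (\<lambda>i. max (mv (posm Wk) n Zp i + mv (negm Wk) n Zm i + bk i)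
      (mv (posm Wk) n Zm i + mv (negm Wk) n Zp i), \<lambda>i. mv (posm Wk) n Zm i + mv (negm Wk) n Zp i)"

lemma Zpm_SS: "Zpm d W b x (Suc (Suc m)) = lay (W (m+2)) (b (m+2)) (d (m+1))
   (fst (Zpm d W b x (Suc m))) (snd (Zpm d W b x (Suc m)))"
  by (simp add: Let_def lay_def)

lemma Zpm_local:
  "(\<forall>j. 1 \<le> j \<and> j \<le> k \<longrightarrow> W j = W' j \<and> b j = b' j) \<Longrightarrow> Zpm d W b x k = Zpm d W' b' x k"
proof (induction k rule: less_induct)
  case (less k)
  show ?case
  proof (cases k)
    case 0 then show ?thesis by simp
  next
    case (Suc k')
    show ?thesis
    proof (cases k')
      case 0 then show ?thesis using Suc less.prems by auto
    next
      case (Suc m)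
      have "Zpm d W b x (Suc m) = Zpm d W' b' x (Suc m)"
        using less.IH[of "Suc m"] less.prems \<open>k = Suc k'\<close> Suc by auto
      moreover have "W (m+2) = W' (m+2)" "b (m+2) = b' (m+2)" using less.prems \<open>k = Suc k'\<close> Suc by auto
      ultimately show ?thesis using \<open>k = Suc k'\<close> Suc by (simp only: Zpm_SS)
    qed
  qed
qed

lemma Zpm_nonneg: "0 \<le> fst (Zpm d W b x k) i \<and> 0 \<le> snd (Zpm d W b x k) i"
proof (induction k arbitrary: i rule: less_induct)
  case (less k)
  show ?case
  proof (cases k)
    case 0 then show ?thesis by simp
  next
    case (Suc k')
    show ?thesis
    proof (cases k')
      case 0 then show ?thesis using Suc by (simp add: relu_nonneg)
    next
      case (Suc m)
      have IH: "\<And>j. 0 \<le> fst (Zpm d W b x (Suc m)) j \<and> 0 \<le> snd (Zpm d W b x (Suc m)) j"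
        using less.IH \<open>k = Suc k'\<close> Suc by auto
      have mvn: "0 \<le> mv A n z i" if "\<And>i j. 0 \<le> A i j" "\<And>j. 0 \<le> z j" for A n z
        unfolding mv_def using that by (auto intro!: sum_nonneg)
      have pn: "\<And>i j. 0 \<le> posm M i j" "\<And>i j. 0 \<le> negm M i j" for M
        by (auto simp: posm_def negm_def relu_nonneg)
      have "0 \<le> mv (posm (W (m+2))) (d (m+1)) (snd (Zpm d W b x (Suc m))) i
              + mv (negm (W (m+2))) (d (m+1)) (fst (Zpm d W b x (Suc m))) i"
        using mvn pn IH by (meson add_nonneg_nonneg)
      then show ?thesis using \<open>k = Suc k'\<close> Suc by (simp only: Zpm_SS) (auto simp: lay_def)
    qed
  qed
qed

context
  fixes d :: "nat \<Rightarrow> nat" and x :: vec and W :: "nat \<Rightarrow> mat" and b :: "nat \<Rightarrow> vec"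
    and l :: nat and U1 U2 :: mat and c1 c2 :: vec and t :: real
  assumes t0: "0 \<le> t" and t1: "t \<le> 1"
begin

lemma Z_jensen:
  "fst (Zpm d (W(l := (\<lambda>i j. t * U1 i j + (1 - t) * U2 i j))) (b(l := (\<lambda>i. t * c1 i + (1 - t) * c2 i))) x k) i \<le> t * fst (Zpm d (W(l := U1)) (b(l := c1)) x k) i + (1-t) * fst (Zpm d (W(l := U2)) (b(l := c2)) x k) i
   \<and> snd (Zpm d (W(l := (\<lambda>i j. t * U1 i j + (1 - t) * U2 i j))) (b(l := (\<lambda>i. t * c1 i + (1 - t) * c2 i))) x k) i \<le> t * snd (Zpm d (W(l := U1)) (b(l := c1)) x k) i + (1-t) * snd (Zpm d (W(l := U2)) (b(l := c2)) x k) i"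
proof (induction k arbitrary: i rule: less_induct)
  case (less k)
  show ?case
  proof (cases k)
    case 0 then show ?thesis by simp
  next
    case (Suc k')
    show ?thesis
    proof (cases k')
      case 0
      show ?thesis
      proof (cases "l = 1")
        case True
        have s: "(\<Sum>j<d 0. (t * U1 i j + (1 - t) * U2 i j) * x j) = t * (\<Sum>j<d 0. U1 i j * x j) + (1-t) * (\<Sum>j<d 0. U2 i j * x j)"
          by (rule sum_comb(2))
        have "(\<Sum>j<d 0. (t * U1 i j + (1 - t) * U2 i j) * x j) + (t * c1 i + (1 - t) * c2 i)
            = t * ((\<Sum>j<d 0. U1 i j * x j) + c1 i) + (1-t) * ((\<Sum>j<d 0. U2 i j * x j) + c2 i)"
          unfolding s by (simp add: algebra_simps)
        then show ?thesis using Suc 0 True relu_jensen[OF t0 t1] by simp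
      next
        case False
        then show ?thesis using Suc 0 by (simp add: algebra_simps)
      qed
    next
      case (Suc m)
      let ?n = "d (m+1)"
      have kk: "k = Suc (Suc m)" using \<open>k = Suc k'\<close> Suc by simp
      show ?thesis
      proof (cases "l = m+2")
        case True
        have eq1: "Zpm d (W(l := U1)) (b(l := c1)) x (Suc m) = Zpm d W b x (Suc m)"
          "Zpm d (W(l := U2)) (b(l := c2)) x (Suc m) = Zpm d W b x (Suc m)"
          "Zpm d (W(l := (\<lambda>i j. t * U1 i j + (1 - t) * U2 i j))) (b(l := (\<lambda>i. t * c1 i + (1 - t) * c2 i))) x (Suc m) = Zpm d W b x (Suc m)"
          using True by (auto intro!: Zpm_local)
        define P where "P = fst (Zpm d W b x (Suc m))"
        define M where "M = snd (Zpm d W b x (Suc m))"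
        have P0: "\<forall>j<?n. 0 \<le> P j" and M0: "\<forall>j<?n. 0 \<le> M j" using Zpm_nonneg P_def M_def by auto
        note A = mv_jensenW[OF t0 t1 P0, of U1 U2 i] mv_jensenW[OF t0 t1 M0, of U1 U2 i]
        have zm: "mv (posm (\<lambda>i j. t*U1 i j + (1-t)*U2 i j)) ?n M i + mv (negm (\<lambda>i j. t*U1 i j + (1-t)*U2 i j)) ?n P i
           \<le> t * (mv (posm U1) ?n M i + mv (negm U1) ?n P i) + (1-t) * (mv (posm U2) ?n M i + mv (negm U2) ?n P i)"
          using A by (simp add: algebra_simps)
        have pp: "mv (posm (\<lambda>i j. t*U1 i j + (1-t)*U2 i j)) ?n P i + mv (negm (\<lambda>i j. t*U1 i j + (1-t)*U2 i j)) ?n M i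
              + (t * c1 i + (1-t) * c2 i)
           \<le> t * (mv (posm U1) ?n P i + mv (negm U1) ?n M i + c1 i) + (1-t) * (mv (posm U2) ?n P i + mv (negm U2) ?n M i + c2 i)"
          using A by (simp add: algebra_simps)
        show ?thesis unfolding kk Zpm_SS eq1
          using True max_jensen[OF t0 t1 pp zm] zm by (simp add: lay_def P_def M_def)
      next
        case False
        define Pt where "Pt = fst (Zpm d (W(l := (\<lambda>i j. t * U1 i j + (1 - t) * U2 i j))) (b(l := (\<lambda>i. t * c1 i + (1 - t) * c2 i))) x (Suc m))"
        define Mt where "Mt = snd (Zpm d (W(l := (\<lambda>i j. t * U1 i j + (1 - t) * U2 i j))) (b(l := (\<lambda>i. t * c1 i + (1 - t) * c2 i))) x (Suc m))"
        define P1 where "P1 = fst (Zpm d (W(l := U1)) (b(l := c1)) x (Suc m))"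
        define M1 where "M1 = snd (Zpm d (W(l := U1)) (b(l := c1)) x (Suc m))"
        define P0 where "P0 = fst (Zpm d (W(l := U2)) (b(l := c2)) x (Suc m))"
        define M0 where "M0 = snd (Zpm d (W(l := U2)) (b(l := c2)) x (Suc m))"
        have IHP: "\<forall>j<?n. Pt j \<le> t * P1 j + (1-t) * P0 j" and IHM: "\<forall>j<?n. Mt j \<le> t * M1 j + (1-t) * M0 j"
          unfolding Pt_def P1_def P0_def Mt_def M1_def M0_def using less.IH[of "Suc m"] kk by blast+
        have pn: "\<forall>j. 0 \<le> posm M i j" "\<forall>j. 0 \<le> negm M i j" for M
          by (auto simp: posm_def negm_def relu_nonneg)
        note A = mv_jensen[where A="posm (W (m+2))" and i=i, OF pn(1) IHP] mv_jensen[where A="negm (W (m+2))" and i=i, OF pn(2) IHP]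
                 mv_jensen[where A="posm (W (m+2))" and i=i, OF pn(1) IHM] mv_jensen[where A="negm (W (m+2))" and i=i, OF pn(2) IHM]
        let ?A = "posm (W (m+2))" and ?B = "negm (W (m+2))"
        have zm: "mv ?A ?n Mt i + mv ?B ?n Pt i \<le> t * (mv ?A ?n M1 i + mv ?B ?n P1 i) + (1-t) * (mv ?A ?n M0 i + mv ?B ?n P0 i)"
          using A by (simp add: algebra_simps)
        have pp: "mv ?A ?n Pt i + mv ?B ?n Mt i + b (m+2) i \<le> t * (mv ?A ?n P1 i + mv ?B ?n M1 i + b (m+2) i) + (1-t) * (mv ?A ?n P0 i + mv ?B ?n M0 i + b (m+2) i)"
          using A by (simp add: algebra_simps)
        show ?thesis unfolding kk Zpm_SS
          using False max_jensen[OF t0 t1 pp zm] zm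
          by (simp add: lay_def Pt_def Mt_def P1_def M1_def P0_def M0_def)
      qed
    qed
  qed
qed

end

lemma sum_jensen:
  assumes "\<forall>j\<in>S. ft j \<le> (t::real) * f1 j + (1-t) * f0 j"
  shows "sum ft S \<le> t * sum f1 S + (1-t) * sum f0 S"
proof -
  have "sum ft S \<le> (\<Sum>j\<in>S. t * f1 j + (1-t) * f0 j)" using assms by (intro sum_mono) auto
  also have "\<dots> = t * sum f1 S + (1-t) * sum f0 S" by (simp add: sum.distrib sum_distrib_left)
  finally show ?thesis .
qed

lemma lse_mono:
  assumes "\<forall>c<C. u c \<le> v c" "C \<ge> 1"
  shows "LSE C u \<le> LSE C v"
proof -
  have pos: "0 < (\<Sum>c<C. exp (u c))"
    using assms(2) by (intro sum_pos) (auto simp: lessThan_empty_iff)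
  have "(\<Sum>c<C. exp (u c)) \<le> (\<Sum>c<C. exp (v c))" using assms(1) by (intro sum_mono) auto
  then show ?thesis unfolding LSE_def using pos by simp
qed

lemma lse_convex:
  assumes "C \<ge> 1" "0 \<le> (t::real)" "t \<le> 1"
  shows "LSE C (\<lambda>c. t * a c + (1-t) * e c) \<le> t * LSE C a + (1-t) * LSE C e"
proof -
  define Sa where "Sa = (\<Sum>c<C. exp (a c))"
  define Se where "Se = (\<Sum>c<C. exp (e c))"
  have Sa: "0 < Sa" unfolding Sa_def using assms(1) by (intro sum_pos) (auto simp: lessThan_empty_iff)
  have Se: "0 < Se" unfolding Se_def using assms(1) by (intro sum_pos) (auto simp: lessThan_empty_iff)
  define K where "K = t * ln Sa + (1-t) * ln Se"
  have cv: "exp (t * p + (1-t) * q) \<le> t * exp p + (1-t) * exp q" for p q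
    using convex_onD[OF exp_convex, of "1-t" p q] assms by (simp add: algebra_simps)
  have "(\<Sum>c<C. exp (t * a c + (1-t) * e c) * exp (- K))
      = (\<Sum>c<C. exp (t * (a c - ln Sa) + (1-t) * (e c - ln Se)))"
    by (intro sum.cong) (auto simp: K_def algebra_simps simp flip: exp_add)
  also have "\<dots> \<le> t * (\<Sum>c<C. exp (a c - ln Sa)) + (1-t) * (\<Sum>c<C. exp (e c - ln Se))"
    by (rule sum_jensen) (auto intro: cv)
  also have "(\<Sum>c<C. exp (a c - ln Sa)) = 1"
    using Sa by (simp add: exp_diff Sa_def flip: sum_divide_distrib)
  also have "(\<Sum>c<C. exp (e c - ln Se)) = 1"
    using Se by (simp add: exp_diff Se_def flip: sum_divide_distrib)
  finally have "(\<Sum>c<C. exp (t * a c + (1-t) * e c)) * exp (- K) \<le> 1"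
    by (simp add: sum_distrib_right)
  then have "(\<Sum>c<C. exp (t * a c + (1-t) * e c)) \<le> exp K"
    by (simp add: exp_minus field_simps)
  moreover have "0 < (\<Sum>c<C. exp (t * a c + (1-t) * e c))"
    using assms(1) by (intro sum_pos) (auto simp: lessThan_empty_iff)
  ultimately have "LSE C (\<lambda>c. t * a c + (1-t) * e c) \<le> K"
    unfolding LSE_def by (metis ln_exp ln_le_cancel_iff exp_gt_zero)
  then show ?thesis unfolding K_def LSE_def Sa_def Se_def .
qed

lemma lse_shift:
  assumes "C \<ge> 1"
  shows "LSE C (\<lambda>c. A c - B c) + (\<Sum>c<C. B c) = LSE C (\<lambda>c. A c + (\<Sum>c'\<in>{..<C}-{c}. B c'))"
proof -
  define S where "S = (\<Sum>c<C. B c)"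
  have pos: "0 < (\<Sum>c<C. exp (A c - B c))" using assms by (intro sum_pos) (auto simp: lessThan_empty_iff)
  have eq: "A c - B c + S = A c + (\<Sum>c'\<in>{..<C}-{c}. B c')" if "c < C" for c
    using that by (simp add: S_def sum.remove[of "{..<C}" c])
  have "LSE C (\<lambda>c. A c - B c) + S = ln ((\<Sum>c<C. exp (A c - B c)) * exp S)"
    unfolding LSE_def using pos by (simp add: ln_mult)
  also have "\<dots> = ln (\<Sum>c<C. exp (A c - B c + S))"
    by (simp add: sum_distrib_right exp_add)
  also have "\<dots> = LSE C (\<lambda>c. A c + (\<Sum>c'\<in>{..<C}-{c}. B c'))"
    unfolding LSE_def by (intro arg_cong[where f=ln] sum.cong) (auto simp: eq)
  finally show ?thesis unfolding S_def .
qed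

context
  fixes d :: "nat \<Rightarrow> nat" and x :: vec and W :: "nat \<Rightarrow> mat" and b :: "nat \<Rightarrow> vec"
    and l :: nat and Ua Ub :: mat and ca cb :: vec and t :: real and L :: nat
  assumes t0: "0 \<le> t" and t1: "t \<le> 1" and L2: "2 \<le> L" and lL: "l \<le> L"
begin

lemma AB_jensen:
  "netA d L (W(l := (\<lambda>i j. t * Ua i j + (1 - t) * Ub i j))) (b(l := (\<lambda>i. t * ca i + (1 - t) * cb i))) x c
     \<le> t * netA d L (W(l := Ua)) (b(l := ca)) x c + (1-t) * netA d L (W(l := Ub)) (b(l := cb)) x c
   \<and> netB d L (W(l := (\<lambda>i j. t * Ua i j + (1 - t) * Ub i j))) (b(l := (\<lambda>i. t * ca i + (1 - t) * cb i))) x c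
     \<le> t * netB d L (W(l := Ua)) (b(l := ca)) x c + (1-t) * netB d L (W(l := Ub)) (b(l := cb)) x c"
proof -
  let ?n = "d (L - 1)"
  define Pt where "Pt = fst (Zpm d (W(l := (\<lambda>i j. t * Ua i j + (1 - t) * Ub i j))) (b(l := (\<lambda>i. t * ca i + (1 - t) * cb i))) x (L-1))"
  define Mt where "Mt = snd (Zpm d (W(l := (\<lambda>i j. t * Ua i j + (1 - t) * Ub i j))) (b(l := (\<lambda>i. t * ca i + (1 - t) * cb i))) x (L-1))"
  define P1 where "P1 = fst (Zpm d (W(l := Ua)) (b(l := ca)) x (L-1))"
  define M1 where "M1 = snd (Zpm d (W(l := Ua)) (b(l := ca)) x (L-1))"
  define P0 where "P0 = fst (Zpm d (W(l := Ub)) (b(l := cb)) x (L-1))"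
  define M0 where "M0 = snd (Zpm d (W(l := Ub)) (b(l := cb)) x (L-1))"
  have At: "netA d L (W(l := (\<lambda>i j. t * Ua i j + (1 - t) * Ub i j))) (b(l := (\<lambda>i. t * ca i + (1 - t) * cb i))) x c
     = mv (posm ((W(l := (\<lambda>i j. t * Ua i j + (1 - t) * Ub i j))) L)) ?n Pt c + mv (negm ((W(l := (\<lambda>i j. t * Ua i j + (1 - t) * Ub i j))) L)) ?n Mt c
       + relu ((b(l := (\<lambda>i. t * ca i + (1 - t) * cb i))) L c)"
   and Bt: "netB d L (W(l := (\<lambda>i j. t * Ua i j + (1 - t) * Ub i j))) (b(l := (\<lambda>i. t * ca i + (1 - t) * cb i))) x c
     = mv (posm ((W(l := (\<lambda>i j. t * Ua i j + (1 - t) * Ub i j))) L)) ?n Mt c + mv (negm ((W(l := (\<lambda>i j. t * Ua i j + (1 - t) * Ub i j))) L)) ?n Pt c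
       + relu (- (b(l := (\<lambda>i. t * ca i + (1 - t) * cb i))) L c)"
    unfolding netA_def netB_def Pt_def Mt_def Let_def by simp_all
  have A1: "netA d L (W(l := Ua)) (b(l := ca)) x c = mv (posm ((W(l := Ua)) L)) ?n P1 c + mv (negm ((W(l := Ua)) L)) ?n M1 c + relu ((b(l := ca)) L c)"
   and B1: "netB d L (W(l := Ua)) (b(l := ca)) x c = mv (posm ((W(l := Ua)) L)) ?n M1 c + mv (negm ((W(l := Ua)) L)) ?n P1 c + relu (- (b(l := ca)) L c)"
    unfolding netA_def netB_def P1_def M1_def Let_def by simp_all
  have A0: "netA d L (W(l := Ub)) (b(l := cb)) x c = mv (posm ((W(l := Ub)) L)) ?n P0 c + mv (negm ((W(l := Ub)) L)) ?n M0 c + relu ((b(l := cb)) L c)"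
   and B0: "netB d L (W(l := Ub)) (b(l := cb)) x c = mv (posm ((W(l := Ub)) L)) ?n M0 c + mv (negm ((W(l := Ub)) L)) ?n P0 c + relu (- (b(l := cb)) L c)"
    unfolding netA_def netB_def P0_def M0_def Let_def by simp_all
  show ?thesis
  proof (cases "l = L")
    case True
    have "Pt = P1 \<and> Pt = P0 \<and> Mt = M1 \<and> Mt = M0"
    proof -
      have "Zpm d (W(l := (\<lambda>i j. t * Ua i j + (1 - t) * Ub i j))) (b(l := (\<lambda>i. t * ca i + (1 - t) * cb i))) x (L-1) = Zpm d W b x (L-1)"
           "Zpm d (W(l := Ua)) (b(l := ca)) x (L-1) = Zpm d W b x (L-1)"
           "Zpm d (W(l := Ub)) (b(l := cb)) x (L-1) = Zpm d W b x (L-1)"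
        using True L2 by (auto intro!: Zpm_local)
      then show ?thesis unfolding Pt_def P1_def P0_def Mt_def M1_def M0_def by simp
    qed
    then have e: "P1 = Pt" "P0 = Pt" "M1 = Mt" "M0 = Mt" by auto
    have Pn: "\<forall>j<?n. 0 \<le> Pt j" and Mn: "\<forall>j<?n. 0 \<le> Mt j" using Zpm_nonneg Pt_def Mt_def by auto
    note X = mv_jensenW[OF t0 t1 Pn, of Ua Ub c] mv_jensenW[OF t0 t1 Mn, of Ua Ub c]
        relu_jensen[OF t0 t1, of "ca c" "cb c"] relu_jensen_neg[OF t0 t1, of "ca c" "cb c"]
    show ?thesis unfolding At Bt A1 B1 A0 B0 e using True X by (simp add: algebra_simps)
  next
    case False
    have IHP: "\<forall>j<?n. Pt j \<le> t * P1 j + (1-t) * P0 j" and IHM: "\<forall>j<?n. Mt j \<le> t * M1 j + (1-t) * M0 j"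
      unfolding Pt_def P1_def P0_def Mt_def M1_def M0_def using Z_jensen[OF t0 t1] by blast+
    have pn: "\<forall>j. 0 \<le> posm M i j" "\<forall>j. 0 \<le> negm M i j" for M i
      by (auto simp: posm_def negm_def relu_nonneg)
    note X = mv_jensen[where A="posm (W L)" and i=c, OF pn(1) IHP] mv_jensen[where A="negm (W L)" and i=c, OF pn(2) IHP]
             mv_jensen[where A="posm (W L)" and i=c, OF pn(1) IHM] mv_jensen[where A="negm (W L)" and i=c, OF pn(2) IHM]
    show ?thesis unfolding At Bt A1 B1 A0 B0 using False X by (simp add: algebra_simps)
  qed
qed

end

theorem corollary3p5:
  fixes d :: "nat \<Rightarrow> nat" and L C :: nat and x :: vec and y :: nat
  assumes "L \<ge> 2" and "C \<ge> 1" and "y < C"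
  shows "(\<forall>W b. CE_loss d L C x y W b = g_part d L C x y W b - h_part d L C x y W b)
       \<and> (\<forall>W b l. 1 \<le> l \<and> l \<le> L \<longrightarrow>
             block_convex (g_part d L C x y) W b l \<and> block_convex (h_part d L C x y) W b l)"
proof (intro conjI allI impI)
  fix W b
  show "CE_loss d L C x y W b = g_part d L C x y W b - h_part d L C x y W b"
    unfolding CE_loss_def g_part_def h_part_def by simp
next
  fix W b l
  assume l: "1 \<le> l \<and> l \<le> L"
  have galt: "g_part d L C x y W' b' = LSE C (\<lambda>c. netA d L W' b' x c + (\<Sum>c'\<in>{..<C}-{c}. netB d L W' b' x c')) + netB d L W' b' x y" for W' b'
    unfolding g_part_def netF_def using lse_shift[OF assms(2), of "netA d L W' b' x" "netB d L W' b' x"] by simp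
  show "block_convex (g_part d L C x y) W b l" unfolding block_convex_def
  proof (intro allI impI)
    fix U1 U2 :: mat and c1 c2 :: vec and t :: real
    assume t: "0 \<le> t \<and> t \<le> 1"
    note J = AB_jensen[where t=t and L=L and l=l and d=d and x=x and W=W and b=b and Ua=U1 and Ub=U2 and ca=c1 and cb=c2, OF conjunct1[OF t] conjunct2[OF t] assms(1) conjunct2[OF l]]
    let ?u = "\<lambda>W' b' c. netA d L W' b' x c + (\<Sum>c'\<in>{..<C}-{c}. netB d L W' b' x c')"
    let ?Wt = "W(l := (\<lambda>i j. t * U1 i j + (1 - t) * U2 i j))" and ?bt = "b(l := (\<lambda>i. t * c1 i + (1 - t) * c2 i))"
    have uj: "\<forall>c<C. ?u ?Wt ?bt c \<le> t * ?u (W(l := U1)) (b(l := c1)) c + (1-t) * ?u (W(l := U2)) (b(l := c2)) c"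
    proof (intro allI impI)
      fix c assume "c < C"
      have "(\<Sum>c'\<in>{..<C}-{c}. netB d L ?Wt ?bt x c') \<le> t * (\<Sum>c'\<in>{..<C}-{c}. netB d L (W(l := U1)) (b(l := c1)) x c')
          + (1-t) * (\<Sum>c'\<in>{..<C}-{c}. netB d L (W(l := U2)) (b(l := c2)) x c')"
        using J by (intro sum_jensen) blast
      then show "?u ?Wt ?bt c \<le> t * ?u (W(l := U1)) (b(l := c1)) c + (1-t) * ?u (W(l := U2)) (b(l := c2)) c"
        using J[of c] by (simp add: algebra_simps)
    qed
    have "LSE C (?u ?Wt ?bt) \<le> LSE C (\<lambda>c. t * ?u (W(l := U1)) (b(l := c1)) c + (1-t) * ?u (W(l := U2)) (b(l := c2)) c)"
      by (rule lse_mono[OF uj assms(2)])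
    also have "\<dots> \<le> t * LSE C (?u (W(l := U1)) (b(l := c1))) + (1-t) * LSE C (?u (W(l := U2)) (b(l := c2)))"
      using t assms(2) by (intro lse_convex) auto
    finally show "g_part d L C x y ?Wt ?bt \<le> t * g_part d L C x y (W(l := U1)) (b(l := c1)) + (1 - t) * g_part d L C x y (W(l := U2)) (b(l := c2))"
      unfolding galt using J[of y] by (simp add: algebra_simps)
  qed
  show "block_convex (h_part d L C x y) W b l" unfolding block_convex_def
  proof (intro allI impI)
    fix U1 U2 :: mat and c1 c2 :: vec and t :: real
    assume t: "0 \<le> t \<and> t \<le> 1"
    note J = AB_jensen[where t=t and L=L and l=l and d=d and x=x and W=W and b=b and Ua=U1 and Ub=U2 and ca=c1 and cb=c2, OF conjunct1[OF t] conjunct2[OF t] assms(1) conjunct2[OF l]]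
    let ?Wt = "W(l := (\<lambda>i j. t * U1 i j + (1 - t) * U2 i j))" and ?bt = "b(l := (\<lambda>i. t * c1 i + (1 - t) * c2 i))"
    have "(\<Sum>c<C. netB d L ?Wt ?bt x c) \<le> t * (\<Sum>c<C. netB d L (W(l := U1)) (b(l := c1)) x c)
          + (1-t) * (\<Sum>c<C. netB d L (W(l := U2)) (b(l := c2)) x c)"
      using J by (intro sum_jensen) blast
    then show "h_part d L C x y ?Wt ?bt \<le> t * h_part d L C x y (W(l := U1)) (b(l := c1)) + (1 - t) * h_part d L C x y (W(l := U2)) (b(l := c2))"
      unfolding h_part_def using J[of y] by (simp add: algebra_simps)
  qed
qed

end
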